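(* Let $P\subseteq\mathbb{R}^n$ be an $n$-dimensional polytope such that $*P$ is a grounded almost-pillar, and let $F$ be the unique bottom face of $P$. Then there exist a pillar $Q$ and a grounded almost-pillar $S$ in $\mathbb{R}^n$ such that in $\mathcal{P}(\mathbb{R}^n)$ \[ P=Q+F-S. \]
   Context: $\mathcal{P}(\mathbb{R}^n)$ is the Grothendieck group of polytopes (convex hulls of nonempty finite sets) under Minkowski sum; $*P=\{-p:p\in P\}$. Let $\mathbf{z}=(0,\dots,0,1)$, $Z=\mathrm{hull}\{0,\mathbf{z}\}$. A polytope is flat if it lies in a translate of $\mathbf{z}^\perp$. For an $n$-dimensional polytope $P$, a codimension-1 face $F=\{p\in P:\phi(p)=\max_P\phi\}$ (with $\phi$ unique up to positive scalar) is a bottom/vertical/top face according as $\phi(\mathbf{z})<0,=0,>0$. An $n$-dimensional polytope is grounded if it has exactly one bottom face and it is flat; a pillar if it equals $Q+k\cdot Z$ for a flat polytope $Q$ and $k>0$; an almost-pillar if it has exactly one bottom face and exactly one top face. *)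

theory Defs
  imports "HOL-Analysis.Analysis"
begin

text \<open>Ambient space R^n: real^'n with a well-ordered finite index type; the
last coordinate is the greatest index.\<close>

definition zvec :: "real^'n::{finite,wellorder}" where
  "zvec = axis (GREATEST i. True) 1"

definition ptope :: "(real^'n::{finite,wellorder}) set \<Rightarrow> bool" where
  "ptope P \<longleftrightarrow> (\<exists>V. finite V \<and> V \<noteq> {} \<and> P = convex hull V)"

definition msum :: "(real^'n::{finite,wellorder}) set \<Rightarrow> (real^'n::{finite,wellorder}) set \<Rightarrow> (real^'n::{finite,wellorder}) set" where
  "msum A B = {a + b | a b. a \<in> A \<and> b \<in> B}"

definition reflect :: "(real^'n::{finite,wellorder}) set \<Rightarrow> (real^'n::{finite,wellorder}) set" where
  "reflect P = uminus ` P"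

definition ndim :: "(real^'n::{finite,wellorder}) set \<Rightarrow> bool" where
  "ndim P \<longleftrightarrow> ptope P \<and> aff_dim P = int CARD('n)"

definition flat :: "(real^'n::{finite,wellorder}) set \<Rightarrow> bool" where
  "flat A \<longleftrightarrow> (\<exists>c. \<forall>p\<in>A. inner p zvec = c)"

definition facet_dir :: "(real^'n::{finite,wellorder}) set \<Rightarrow> (real^'n::{finite,wellorder}) set \<Rightarrow> real^'n::{finite,wellorder} \<Rightarrow> bool" where
  "facet_dir P F phi \<longleftrightarrow> F facet_of P \<and> phi \<noteq> 0 \<and>
     F = {p \<in> P. \<forall>q\<in>P. inner phi q \<le> inner phi p}"

definition bottom_face :: "(real^'n::{finite,wellorder}) set \<Rightarrow> (real^'n::{finite,wellorder}) set \<Rightarrow> bool" where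
  "bottom_face P F \<longleftrightarrow> (\<exists>phi. facet_dir P F phi \<and> inner phi zvec < 0)"

definition top_face :: "(real^'n::{finite,wellorder}) set \<Rightarrow> (real^'n::{finite,wellorder}) set \<Rightarrow> bool" where
  "top_face P F \<longleftrightarrow> (\<exists>phi. facet_dir P F phi \<and> inner phi zvec > 0)"

definition grounded :: "(real^'n::{finite,wellorder}) set \<Rightarrow> bool" where
  "grounded P \<longleftrightarrow> ndim P \<and> (\<exists>!F. bottom_face P F) \<and> (\<forall>F. bottom_face P F \<longrightarrow> flat F)"

definition pillar :: "(real^'n::{finite,wellorder}) set \<Rightarrow> bool" where
  "pillar P \<longleftrightarrow> ndim P \<and>
     (\<exists>Q k. ptope Q \<and> flat Q \<and> k > 0 \<and> P = msum Q (closed_segment 0 (k *\<^sub>R zvec)))"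

definition almost_pillar :: "(real^'n::{finite,wellorder}) set \<Rightarrow> bool" where
  "almost_pillar P \<longleftrightarrow> ndim P \<and> (\<exists>!F. bottom_face P F) \<and> (\<exists>!F. top_face P F)"

text \<open>Equality of classes [A] = [B] in the Grothendieck group of polytopes
  under Minkowski sum (literal definition for a commutative monoid).\<close>
definition groth_eq :: "(real^'n::{finite,wellorder}) set \<Rightarrow> (real^'n::{finite,wellorder}) set \<Rightarrow> bool" where
  "groth_eq A B \<longleftrightarrow> (\<exists>R. ptope R \<and> msum A R = msum B R)"

end

theory Submission
  imports Defs
begin

lemma zvec_inner: "inner (zvec::real^'n::{finite,wellorder}) zvec = 1"
  by (simp add: zvec_def inner_axis_axis)

lemma zvec_nz: "(zvec::real^'n::{finite,wellorder}) \<noteq> 0"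
proof
  assume "(zvec::real^'n::{finite,wellorder}) = 0" with zvec_inner[where 'n='n] show False by simp
qed

lemma argmax_eq:
  fixes A :: "'a::real_inner set"
  assumes "\<And>x. x \<in> A \<Longrightarrow> a \<bullet> x \<le> c" "A \<inter> {x. a \<bullet> x = c} \<noteq> {}"
  shows "A \<inter> {x. a \<bullet> x = c} = {p \<in> A. \<forall>q\<in>A. a \<bullet> q \<le> a \<bullet> p}"
proof -
  obtain y where y: "y \<in> A" "a \<bullet> y = c" using assms(2) by auto
  show ?thesis
    using y assms(1) by (auto intro: antisym)
qed

lemma facets_nested_eq:
  assumes "G facet_of X" "H facet_of X" "G \<subseteq> H"
  shows "G = H"
proof (rule ccontr)
  assume ne: "G \<noteq> H"
  have "G face_of H"
    using assms face_of_subset facet_of_imp_face_of facet_of_imp_subset by blast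
  moreover have "convex H" using assms(2) face_of_imp_convex facet_of_imp_face_of by blast
  ultimately have "aff_dim G < aff_dim H" using face_of_aff_dim_lt ne by blast
  then show False using assms(1,2) by (simp add: facet_of_def)
qed

lemma exit_lemma:
  fixes P :: "(real^'n) set" and w :: "real^'n"
  assumes "polytope P" "affine hull P = UNIV" "p \<in> P" "\<And>e. e > 0 \<Longrightarrow> p + e *\<^sub>R w \<notin> P"
  shows "\<exists>G phi. G facet_of P \<and> phi \<noteq> 0 \<and> G = {p \<in> P. \<forall>q\<in>P. inner phi q \<le> inner phi p}
           \<and> inner phi w > 0 \<and> p \<in> G"
proof -
  have "polyhedron P" using assms(1) polytope_imp_polyhedron by blast
  then obtain Fs where fin: "finite Fs" and seq: "P = affine hull P \<inter> \<Inter>Fs"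
    and faces: "\<And>h. h \<in> Fs \<Longrightarrow> \<exists>a b. a \<noteq> 0 \<and> h = {x. a \<bullet> x \<le> b}"
    and min: "\<And>F'. F' \<subset> Fs \<Longrightarrow> P \<subset> (affine hull P) \<inter> \<Inter>F'"
    by (simp add: polyhedron_Int_affine_minimal) meson
  then obtain a b where ab: "\<And>h. h \<in> Fs \<Longrightarrow> a h \<noteq> 0 \<and> h = {x. a h \<bullet> x \<le> b h}"
    by metis
  have Peq: "P = \<Inter>Fs" using seq assms(2) by simp
  have pin: "\<And>h. h \<in> Fs \<Longrightarrow> a h \<bullet> p \<le> b h" using assms(3) Peq ab by blast
  have "\<exists>h\<in>Fs. a h \<bullet> w > 0 \<and> a h \<bullet> p = b h"
  proof (rule ccontr)
    assume nh: "\<not> ?thesis"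
    define E where "E = insert 1 ((\<lambda>h. (b h - a h \<bullet> p) / (a h \<bullet> w)) ` {h\<in>Fs. a h \<bullet> w > 0})"
    define e where "e = Min E"
    have finE: "finite E" "E \<noteq> {}" using fin by (auto simp: E_def)
    have Epos: "\<forall>x\<in>E. x > 0"
    proof
      fix x assume "x \<in> E"
      then consider "x = 1" | h where "h \<in> Fs" "a h \<bullet> w > 0" "x = (b h - a h \<bullet> p) / (a h \<bullet> w)"
        by (auto simp: E_def)
      then show "x > 0"
      proof cases
        case 2 then have "a h \<bullet> p < b h" using nh pin[of h] by force
        then show ?thesis using 2 by simp
      qed simp
    qed
    have e0: "e > 0" using Epos finE by (simp add: e_def)
    have "p + e *\<^sub>R w \<in> P"
      unfolding Peq
    proof
      fix h assume h: "h \<in> Fs"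
      show "p + e *\<^sub>R w \<in> h"
      proof (cases "a h \<bullet> w > 0")
        case True
        then have "e \<le> (b h - a h \<bullet> p) / (a h \<bullet> w)" unfolding e_def using finE h
          by (auto simp: E_def)
        then have "e * (a h \<bullet> w) \<le> b h - a h \<bullet> p" using True by (simp add: pos_le_divide_eq)
        then have "a h \<bullet> (p + e *\<^sub>R w) \<le> b h" by (simp add: inner_add_right)
        then show ?thesis using ab[OF h] by blast
      next
        case False
        then have "e * (a h \<bullet> w) \<le> 0" using e0 by (simp add: mult_nonneg_nonpos)
        then have "a h \<bullet> (p + e *\<^sub>R w) \<le> b h" using pin[OF h] by (simp add: inner_add_right)
        then show ?thesis using ab[OF h] by blast
      qed
    qed
    then show False using assms(4) e0 by blast
  qed
  then obtain h where h: "h \<in> Fs" "a h \<bullet> w > 0" "a h \<bullet> p = b h" by blast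
  define G where "G = P \<inter> {x. a h \<bullet> x = b h}"
  have Gf: "G facet_of P" unfolding G_def
    using facet_of_polyhedron_explicit[OF fin seq ab min] h(1) by blast
  have le: "\<And>x. x \<in> P \<Longrightarrow> a h \<bullet> x \<le> b h" using Peq ab h(1) by blast
  have "G = {p \<in> P. \<forall>q\<in>P. inner (a h) q \<le> inner (a h) p}"
    unfolding G_def using argmax_eq[of P "a h" "b h", OF le] h assms(3) by blast
  then show ?thesis using Gf ab h assms(3) unfolding G_def by blast
qed


lemma max_extent:
  fixes P :: "(real^'n) set"
  assumes "compact P" "p \<in> P" "w \<noteq> 0"
  shows "\<exists>t\<ge>0. p + t *\<^sub>R w \<in> P \<and> (\<forall>e>0. p + (t + e) *\<^sub>R w \<notin> P)"
proof -
  define T where "T = {t. 0 \<le> t \<and> p + t *\<^sub>R w \<in> P}"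
  have "closed T"
  proof -
    have "closed ((\<lambda>t. p + t *\<^sub>R w) -` P)"
      by (rule continuous_closed_vimage) (auto intro: continuous_intros compact_imp_closed assms)
    then have "closed ({0..} \<inter> (\<lambda>t. p + t *\<^sub>R w) -` P)" by (simp add: closed_Int)
    moreover have "T = {0..} \<inter> (\<lambda>t. p + t *\<^sub>R w) -` P" by (auto simp: T_def)
    ultimately show ?thesis by simp
  qed
  moreover have "bounded T"
  proof -
    obtain r where r: "\<And>x. x \<in> P \<Longrightarrow> norm x \<le> r"
      using compact_imp_bounded[OF assms(1)] bounded_iff by blast
    have "\<bar>t\<bar> \<le> 2 * r / norm w" if "t \<in> T" for t
    proof -
      have t: "0 \<le> t" "p + t *\<^sub>R w \<in> P" using that by (auto simp: T_def)
      have "norm (t *\<^sub>R w) \<le> norm (p + t *\<^sub>R w) + norm p"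
        by (metis add_diff_cancel_left' norm_diff_ineq norm_minus_commute order_refl diff_le_eq norm_triangle_ineq4 add.commute)
      also have "\<dots> \<le> 2 * r" using r[OF t(2)] r[OF assms(2)] by simp
      finally have "t * norm w \<le> 2 * r" using t(1) by simp
      then show ?thesis using t(1) assms(3) by (simp add: pos_le_divide_eq)
    qed
    then show ?thesis unfolding bounded_iff by (metis real_norm_def)
  qed
  ultimately have "compact T" by (simp add: compact_eq_bounded_closed)
  moreover have "T \<noteq> {}" using assms(2) by (auto simp: T_def intro!: exI[of _ 0])
  ultimately obtain t where t: "t \<in> T" "\<forall>y\<in>T. y \<le> t" using compact_attains_sup by blast
  show ?thesis
  proof (intro exI conjI allI impI)
    show "0 \<le> t" "p + t *\<^sub>R w \<in> P" using t(1) by (auto simp: T_def)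
    fix e :: real assume "e > 0"
    show "p + (t + e) *\<^sub>R w \<notin> P"
    proof
      assume "p + (t + e) *\<^sub>R w \<in> P"
      then have "t + e \<in> T" using \<open>0 \<le> t\<close> \<open>e > 0\<close> by (simp add: T_def)
      then show False using t(2) \<open>e > 0\<close> by fastforce
    qed
  qed
qed

lemma reflect_facet_dir:
  fixes P G :: "(real^'n) set"
  assumes "G facet_of P" "G = {p \<in> P. \<forall>q\<in>P. inner phi q \<le> inner phi p}"
  shows "(uminus ` G) facet_of (uminus ` P)"
    "uminus ` G = {p \<in> uminus ` P. \<forall>q\<in>uminus ` P. inner (-phi) q \<le> inner (-phi) p}"
proof -
  have lin: "linear (uminus :: real^'n \<Rightarrow> real^'n)" by (simp add: linear_uminus)
  have inj: "inj (uminus :: real^'n \<Rightarrow> real^'n)" by (simp add: inj_on_def)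
  show "(uminus ` G) facet_of (uminus ` P)"
    using assms(1) unfolding facet_of_def
    using face_of_linear_image[OF lin inj] aff_dim_injective_linear_image[OF lin inj] by auto
  show "uminus ` G = {p \<in> uminus ` P. \<forall>q\<in>uminus ` P. inner (-phi) q \<le> inner (-phi) p}"
    using assms(2) by (auto simp: image_iff)
qed


lemma affmap_hull:
  fixes V :: "(real^'n) set"
  shows "(\<lambda>x. x + (inner u x + c) *\<^sub>R w) ` (convex hull V) = convex hull ((\<lambda>x. x + (inner u x + c) *\<^sub>R w) ` V)"
proof -
  define L where "L = (\<lambda>x::real^'n. x + (inner u x) *\<^sub>R w)"
  have lin: "linear L" unfolding L_def
    by (simp add: linear_iff inner_add_right algebra_simps)
  have eq: "(\<lambda>x. x + (inner u x + c) *\<^sub>R w) = (\<lambda>y. c *\<^sub>R w + y) \<circ> L"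
    by (auto simp: L_def algebra_simps)
  show ?thesis unfolding eq image_comp[symmetric]
    by (simp add: convex_hull_linear_image[OF lin] convex_hull_translation)
qed

lemma affmap_aff_dim_le:
  fixes A :: "(real^'n) set"
  shows "aff_dim ((\<lambda>x. x + (inner u x + c) *\<^sub>R w) ` A) \<le> aff_dim A"
proof -
  define L where "L = (\<lambda>x::real^'n. x + (inner u x) *\<^sub>R w)"
  have lin: "linear L" unfolding L_def
    by (simp add: linear_iff inner_add_right algebra_simps)
  have eq: "(\<lambda>x. x + (inner u x + c) *\<^sub>R w) = (\<lambda>y. c *\<^sub>R w + y) \<circ> L"
    by (auto simp: L_def algebra_simps)
  show ?thesis unfolding eq image_comp[symmetric]
    using aff_dim_linear_image_le[OF lin, of A] aff_dim_translation_eq[of "c *\<^sub>R w" "L ` A"] by simp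
qed

lemma slab_hull:
  fixes V A :: "(real^'n) set" and w u1 u2 :: "real^'n" and c1 c2 :: real
  assumes A: "A = convex hull V" and le: "\<And>x. x \<in> A \<Longrightarrow> inner u1 x + c1 \<le> inner u2 x + c2"
  defines "X \<equiv> {x + t *\<^sub>R w | x t. x \<in> A \<and> inner u1 x + c1 \<le> t \<and> t \<le> inner u2 x + c2}"
  shows "X = convex hull ((\<lambda>x. x + (inner u1 x + c1) *\<^sub>R w) ` V \<union> (\<lambda>x. x + (inner u2 x + c2) *\<^sub>R w) ` V)"
proof -
  define g1 where "g1 = (\<lambda>x. x + (inner u1 x + c1) *\<^sub>R w)"
  define g2 where "g2 = (\<lambda>x. x + (inner u2 x + c2) *\<^sub>R w)"
  have cA: "convex A" using A by simp
  have cX: "convex X"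
    unfolding convex_def X_def
  proof (clarify)
    fix x1 t1 x2 t2 and a b :: real
    assume h: "x1 \<in> A" "inner u1 x1 + c1 \<le> t1" "t1 \<le> inner u2 x1 + c2"
      "x2 \<in> A" "inner u1 x2 + c1 \<le> t2" "t2 \<le> inner u2 x2 + c2" "0 \<le> a" "0 \<le> b" "a + b = 1"
    have m: "a *\<^sub>R x1 + b *\<^sub>R x2 \<in> A" using cA h by (simp add: convexD)
    have e: "a *\<^sub>R (x1 + t1 *\<^sub>R w) + b *\<^sub>R (x2 + t2 *\<^sub>R w) = (a *\<^sub>R x1 + b *\<^sub>R x2) + (a * t1 + b * t2) *\<^sub>R w"
      by (simp add: algebra_simps)
    have cc1: "c1 = a*c1 + b*c1" using h(9) by (metis distrib_right mult_1)
    have cc2: "c2 = a*c2 + b*c2" using h(9) by (metis distrib_right mult_1)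
    have i1: "inner u1 (a *\<^sub>R x1 + b *\<^sub>R x2) + c1 = a * (inner u1 x1 + c1) + b * (inner u1 x2 + c1)"
      by (subst cc1) (simp add: inner_add_right distrib_left)
    have i2: "inner u2 (a *\<^sub>R x1 + b *\<^sub>R x2) + c2 = a * (inner u2 x1 + c2) + b * (inner u2 x2 + c2)"
      by (subst cc2) (simp add: inner_add_right distrib_left)
    have "inner u1 (a *\<^sub>R x1 + b *\<^sub>R x2) + c1 \<le> a * t1 + b * t2"
      unfolding i1 using h by (intro add_mono mult_left_mono) auto
    moreover have "a * t1 + b * t2 \<le> inner u2 (a *\<^sub>R x1 + b *\<^sub>R x2) + c2"
      unfolding i2 using h by (intro add_mono mult_left_mono) auto
    ultimately show "\<exists>x t. a *\<^sub>R (x1 + t1 *\<^sub>R w) + b *\<^sub>R (x2 + t2 *\<^sub>R w) = x + t *\<^sub>R w \<and>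
               x \<in> A \<and> inner u1 x + c1 \<le> t \<and> t \<le> inner u2 x + c2"
      using e m by blast
  qed
  have g1X: "g1 x \<in> X" if "x \<in> A" for x
    unfolding X_def g1_def using that le[OF that] by blast
  have g2X: "g2 x \<in> X" if "x \<in> A" for x
    unfolding X_def g2_def using that le[OF that] by blast
  have VA: "V \<subseteq> A" using A by (simp add: hull_subset)
  have sup: "convex hull (g1 ` V \<union> g2 ` V) \<subseteq> X"
    by (rule hull_minimal) (use cX g1X g2X VA in auto)
  have g1h: "g1 ` A \<subseteq> convex hull (g1 ` V \<union> g2 ` V)"
    unfolding A g1_def affmap_hull by (rule hull_mono) auto
  have g2h: "g2 ` A \<subseteq> convex hull (g1 ` V \<union> g2 ` V)"
    unfolding A g2_def affmap_hull by (rule hull_mono) auto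
  have sub: "X \<subseteq> convex hull (g1 ` V \<union> g2 ` V)"
  proof
    fix y assume "y \<in> X"
    then obtain x t where y: "y = x + t *\<^sub>R w" "x \<in> A" "inner u1 x + c1 \<le> t" "t \<le> inner u2 x + c2"
      unfolding X_def by blast
    have in1: "g1 x \<in> convex hull (g1 ` V \<union> g2 ` V)" using g1h y(2) by blast
    have in2: "g2 x \<in> convex hull (g1 ` V \<union> g2 ` V)" using g2h y(2) by blast
    show "y \<in> convex hull (g1 ` V \<union> g2 ` V)"
    proof (cases "inner u1 x + c1 = inner u2 x + c2")
      case True
      then have "y = g1 x" using y by (simp add: g1_def)
      then show ?thesis using in1 by simp
    next
      case False
      define l1 where "l1 = inner u1 x + c1"
      define l2 where "l2 = inner u2 x + c2"
      have lt: "l1 < l2" using False y l1_def l2_def by simp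
      define lam where "lam = (t - l1) / (l2 - l1)"
      have lam: "0 \<le> lam" "lam \<le> 1" using y lt by (auto simp: lam_def l1_def l2_def field_simps)
      have "y = (1 - lam) *\<^sub>R g1 x + lam *\<^sub>R g2 x"
      proof -
        have e: "lam * (l2 - l1) = t - l1" using lt by (simp add: lam_def)
        have "(1 - lam) * l1 + lam * l2 = t" using e by (simp add: algebra_simps)
        then have "(1 - lam) *\<^sub>R (l1 *\<^sub>R w) + lam *\<^sub>R (l2 *\<^sub>R w) = t *\<^sub>R w"
          by (metis scaleR_add_left scaleR_scaleR)
        then show ?thesis unfolding g1_def g2_def y(1) l1_def[symmetric] l2_def[symmetric]
          by (simp add: algebra_simps)
      qed
      then show ?thesis using in1 in2 lam convexD[OF convex_convex_hull] by (metis diff_add_cancel diff_ge_0_iff_ge)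
    qed
  qed
  show ?thesis using sub sup g1_def g2_def by auto
qed


lemma aff_dim_full_lemma:
  fixes F X :: "(real^'n::{finite,wellorder}) set"
  assumes "F \<subseteq> X" "y \<in> X" "\<forall>x\<in>F. inner phi x = m" "inner phi y \<noteq> m" "aff_dim F = int CARD('n) - 1"
  shows "aff_dim X = int CARD('n)"
proof -
  have "affine hull F \<subseteq> {x. inner phi x = m}"
    by (rule hull_minimal) (use assms(3) affine_hyperplane in auto)
  then have "y \<notin> affine hull F" using assms(4) by auto
  then have "aff_dim (insert y F) = int CARD('n)" using assms(5) by (simp add: aff_dim_insert)
  moreover have "aff_dim (insert y F) \<le> aff_dim X" using assms(1,2) by (intro aff_dim_subset) auto
  moreover have "aff_dim X \<le> int CARD('n)" using aff_dim_le_DIM[of X] by simp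
  ultimately show ?thesis by linarith
qed

lemma split_lemma:
  fixes L U s :: real
  assumes "L \<le> 0" "0 \<le> U" "L \<le> s" "s \<le> U"
  shows "\<exists>t1 s2. 0 \<le> t1 \<and> t1 \<le> U \<and> L \<le> s2 \<and> s2 \<le> 0 \<and> s = t1 + s2"
  using assms by (intro exI[of _ "max s 0"] exI[of _ "min s 0"]) auto


theorem lemma3p10:
  fixes P F :: "(real^'n::{finite,wellorder}) set"
  assumes "ptope P" and "aff_dim P = int CARD('n)"
    and "grounded (reflect P)" and "almost_pillar (reflect P)"
    and "bottom_face P F" and "\<forall>G. bottom_face P G \<longrightarrow> G = F"
  shows "\<exists>Q S. pillar Q \<and> grounded S \<and> almost_pillar S \<and> groth_eq (msum P S) (msum Q F)"
proof -
  define z where "z = (zvec :: real^'n::{finite,wellorder})"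
  have zz: "inner z z = 1" unfolding z_def by (rule zvec_inner)
  have z0: "z \<noteq> 0" unfolding z_def by (rule zvec_nz)
  obtain phi where phiF: "facet_dir P F phi" and phiz: "inner phi z < 0"
    using assms(5) unfolding bottom_face_def z_def by blast
  have polyP: "polytope P" using assms(1) unfolding ptope_def polytope_def by blast
  have compP: "compact P" using polyP polytope_imp_compact by blast
  have convP: "convex P" using polyP polytope_imp_convex by blast
  have affP: "affine hull P = UNIV" using assms(2) aff_dim_eq_full[of P] by simp
  have Ffac: "F facet_of P" and Feq: "F = {p \<in> P. \<forall>q\<in>P. inner phi q \<le> inner phi p}"
    using phiF unfolding facet_dir_def by auto
  have FP: "F \<subseteq> P" using Ffac facet_of_imp_subset by blast
  have Fne: "F \<noteq> {}" using Ffac facet_of_def by blast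
  have affF: "aff_dim F = int CARD('n) - 1" using Ffac assms(2) unfolding facet_of_def by simp
  have polyF: "polytope F" using polyP Ffac face_of_polytope_polytope facet_of_imp_face_of by blast
  then obtain VF where VF: "finite VF" "F = convex hull VF" unfolding polytope_def by blast
  have VFne: "VF \<noteq> {}" using VF Fne by auto
  have compF: "compact F" using polyF polytope_imp_compact by blast
  obtain B' where B': "bottom_face (reflect P) B'" "\<And>G. bottom_face (reflect P) G \<Longrightarrow> G = B'"
    using assms(4) unfolding almost_pillar_def by metis
  obtain c where c: "\<And>p. p \<in> B' \<Longrightarrow> inner p z = c"
    using assms(3) B'(1) unfolding grounded_def flat_def z_def by metis
  define h where "h = - c"
  have topH: "inner p z = h" if "G facet_of P" "psi \<noteq> 0" "G = {p \<in> P. \<forall>q\<in>P. inner psi q \<le> inner psi p}"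
    "inner psi z > 0" "p \<in> G" for G psi p
  proof -
    have "bottom_face (reflect P) (uminus ` G)"
      unfolding bottom_face_def facet_dir_def reflect_def
      using reflect_facet_dir[OF that(1,3)] that(2,4) unfolding z_def
      by (intro exI[of _ "-psi"]) auto
    then have "uminus ` G = B'" using B'(2) by blast
    then have "-p \<in> B'" using that(5) by blast
    then show ?thesis using c[of "-p"] by (simp add: h_def)
  qed
  have up: "\<exists>t\<ge>0. p + t *\<^sub>R z \<in> P \<and> inner (p + t *\<^sub>R z) z = h" if pP: "p \<in> P" for p
  proof -
    obtain t where t: "t \<ge> 0" "p + t *\<^sub>R z \<in> P" "\<forall>e>0. p + (t + e) *\<^sub>R z \<notin> P"
      using max_extent[OF compP pP z0] by blast
    have "\<And>e. e > 0 \<Longrightarrow> (p + t *\<^sub>R z) + e *\<^sub>R z \<notin> P"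
      using t(3) by (simp add: algebra_simps scaleR_add_left)
    then obtain G psi where "G facet_of P" "psi \<noteq> 0" "G = {p \<in> P. \<forall>q\<in>P. inner psi q \<le> inner psi p}"
      "inner psi z > 0" "p + t *\<^sub>R z \<in> G"
      using exit_lemma[OF polyP affP t(2)] by blast
    then show ?thesis using topH t by blast
  qed
  have down: "\<exists>t\<ge>0. p - t *\<^sub>R z \<in> F" if pP: "p \<in> P" for p
  proof -
    obtain t where t: "t \<ge> 0" "p + t *\<^sub>R (-z) \<in> P" "\<forall>e>0. p + (t + e) *\<^sub>R (-z) \<notin> P"
      using max_extent[OF compP pP, of "-z"] z0 by auto
    have "\<And>e. e > 0 \<Longrightarrow> (p + t *\<^sub>R (-z)) + e *\<^sub>R (-z) \<notin> P"
      using t(3) by (simp add: algebra_simps scaleR_add_left)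
    then obtain G psi where G: "G facet_of P" "psi \<noteq> 0" "G = {p \<in> P. \<forall>q\<in>P. inner psi q \<le> inner psi p}"
      "inner psi (-z) > 0" "p + t *\<^sub>R (-z) \<in> G"
      using exit_lemma[OF polyP affP t(2)] by blast
    have "bottom_face P G" unfolding bottom_face_def facet_dir_def z_def[symmetric]
      using G by (intro exI[of _ psi]) auto
    then have "G = F" using assms(6) by blast
    then show ?thesis using G(5) t(1) by auto
  qed
  have hle: "inner p z \<le> h" if pP: "p \<in> P" for p
  proof -
    obtain t where "t \<ge> 0" "inner (p + t *\<^sub>R z) z = h" using up[OF pP] by blast
    then show ?thesis by (simp add: inner_add_left zz)
  qed
  have Prep: "P = {f + t *\<^sub>R z | f t. f \<in> F \<and> 0 \<le> t \<and> t \<le> h - inner f z}"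
  proof safe
    fix p assume p: "p \<in> P"
    obtain t where t: "t \<ge> 0" "p - t *\<^sub>R z \<in> F" using down[OF p] by blast
    have "inner (p - t *\<^sub>R z) z = inner p z - t" by (simp add: inner_diff_left zz)
    then show "\<exists>f t. p = f + t *\<^sub>R z \<and> f \<in> F \<and> 0 \<le> t \<and> t \<le> h - inner f z"
      using t hle[OF p] by (intro exI[of _ "p - t *\<^sub>R z"] exI[of _ t]) auto
  next
    fix f t assume f: "f \<in> F" "0 \<le> t" "t \<le> h - inner f z"
    have fP: "f \<in> P" using f FP by blast
    obtain t1 where t1: "t1 \<ge> 0" "f + t1 *\<^sub>R z \<in> P" "inner (f + t1 *\<^sub>R z) z = h" using up[OF fP] by blast
    have "t1 = h - inner f z" using t1(3) by (simp add: inner_add_left zz)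
    then have tt: "t \<le> t1" using f by simp
    show "f + t *\<^sub>R z \<in> P"
    proof (cases "t1 = 0")
      case True then show ?thesis using tt f fP by simp
    next
      case False
      define u where "u = t / t1"
      have u: "0 \<le> u" "u \<le> 1" using tt f(2) t1(1) False by (auto simp: u_def)
      have "f + t *\<^sub>R z = (1 - u) *\<^sub>R f + u *\<^sub>R (f + t1 *\<^sub>R z)"
        using False by (simp add: u_def algebra_simps)
      then show ?thesis using convexD[OF convP fP t1(2), of "1-u" u] u by simp
    qed
  qed
  obtain f0 where f0: "f0 \<in> F" "\<forall>f\<in>F. inner f0 z \<le> inner f z"
  proof -
    have "continuous_on F (\<lambda>x. inner x z)" by (intro continuous_intros)
    then show ?thesis using continuous_attains_inf[OF compF Fne, of "\<lambda>x. inner x z"] that by blast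
  qed
  define m where "m = inner phi f0"
  have Fm: "inner phi f = m" if "f \<in> F" for f
  proof -
    have "inner phi f0 \<le> inner phi f" using that Feq f0(1) FP by blast
    moreover have "inner phi f \<le> inner phi f0" using that Feq f0(1) FP by blast
    ultimately show ?thesis by (simp add: m_def)
  qed
  define b where "b = inner f0 z - 1"
  have fb: "b < inner f z" if "f \<in> F" for f using f0(2) that unfolding b_def by fastforce
  have fb': "b \<le> inner f z" if "f \<in> F" for f using fb[OF that] by simp
  have fh: "inner f z \<le> h" if "f \<in> F" for f using hle FP that by blast
  define k where "k = h - b"
  have k0: "k > 0" using fh[OF f0(1)] by (simp add: k_def b_def)
  define S where "S = {x + t *\<^sub>R z | x t. x \<in> F \<and> inner (-z) x + b \<le> t \<and> t \<le> inner 0 x + 0}"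
  define Q where "Q = {x + t *\<^sub>R z | x t. x \<in> F \<and> inner (-z) x + b \<le> t \<and> t \<le> inner (-z) x + (b + k)}"
  have Smem: "y \<in> S \<longleftrightarrow> (\<exists>x t. y = x + t *\<^sub>R z \<and> x \<in> F \<and> b - inner x z \<le> t \<and> t \<le> 0)" for y
    unfolding S_def by (auto simp: inner_commute)
  have Qmem: "y \<in> Q \<longleftrightarrow> (\<exists>x t. y = x + t *\<^sub>R z \<and> x \<in> F \<and> b - inner x z \<le> t \<and> t \<le> h - inner x z)" for y
    unfolding Q_def by (auto simp: inner_commute k_def)
  have Shull: "S = convex hull ((\<lambda>x. x + (inner (-z) x + b) *\<^sub>R z) ` VF \<union> (\<lambda>x. x + (inner 0 x + 0) *\<^sub>R z) ` VF)"
    unfolding S_def by (rule slab_hull[OF VF(2)]) (use fb' in \<open>auto simp: inner_commute\<close>)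
  have Qhull: "Q = convex hull ((\<lambda>x. x + (inner (-z) x + b) *\<^sub>R z) ` VF \<union> (\<lambda>x. x + (inner (-z) x + (b + k)) *\<^sub>R z) ` VF)"
    unfolding Q_def by (rule slab_hull[OF VF(2)]) (use k0 in auto)
  have ptS: "ptope S" unfolding ptope_def
    by (rule exI[of _ "(\<lambda>x. x + (inner (-z) x + b) *\<^sub>R z) ` VF \<union> (\<lambda>x. x + (inner 0 x + 0) *\<^sub>R z) ` VF"])
      (use Shull VF(1) VFne in simp)
  have ptQ: "ptope Q" unfolding ptope_def
    by (rule exI[of _ "(\<lambda>x. x + (inner (-z) x + b) *\<^sub>R z) ` VF \<union> (\<lambda>x. x + (inner (-z) x + (b + k)) *\<^sub>R z) ` VF"])
      (use Qhull VF(1) VFne in simp)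
  have convS: "convex S" using Shull by simp
  have FS: "F \<subseteq> S"
  proof
    fix x assume x: "x \<in> F" then show "x \<in> S" unfolding Smem using fb'[OF x]
      by (intro exI[of _ x] exI[of _ 0]) auto
  qed
  have FQ: "F \<subseteq> Q"
  proof
    fix x assume x: "x \<in> F" then show "x \<in> Q" unfolding Qmem using fb'[OF x] fh[OF x]
      by (intro exI[of _ x] exI[of _ 0]) auto
  qed
  have f0S: "f0 - z \<in> S" unfolding Smem using f0(1)
    by (intro exI[of _ f0] exI[of _ "-1"]) (auto simp: b_def)
  have f0Q: "f0 - z \<in> Q" unfolding Qmem using f0(1) fh[OF f0(1)]
    by (intro exI[of _ f0] exI[of _ "-1"]) (auto simp: b_def)
  have phif0: "inner phi (f0 - z) \<noteq> m" using phiz by (simp add: m_def inner_diff_right)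
  have affS: "aff_dim S = int CARD('n)"
    using aff_dim_full_lemma[OF FS f0S _ phif0 affF] Fm by blast
  have affQ: "aff_dim Q = int CARD('n)"
    using aff_dim_full_lemma[OF FQ f0Q _ phif0 affF] Fm by blast
  have innz: "inner (x + t *\<^sub>R z) z = inner x z + t" for x t by (simp add: inner_add_left zz)
  define g1 where "g1 = (\<lambda>x. x + (inner (-z) x + b) *\<^sub>R z)"
  define B where "B = g1 ` F"
  have g1e: "g1 x = x + (b - inner x z) *\<^sub>R z" for x by (simp add: g1_def inner_commute)
  have g1z: "inner (g1 x) z = b" for x by (simp add: g1e innz)
  have B_S: "B = S \<inter> {x. inner (-z) x = -b}"
  proof safe
    fix y assume "y \<in> B"
    then obtain x where x: "x \<in> F" "y = g1 x" by (auto simp: B_def)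
    show "y \<in> S" unfolding Smem using x fb'[OF x(1)] g1e
      by (intro exI[of _ x] exI[of _ "b - inner x z"]) auto
    show "inner (-z) y = -b" using x g1z by (simp add: inner_commute)
  next
    fix y assume y: "y \<in> S" "inner (-z) y = -b"
    then obtain x t where xt: "y = x + t *\<^sub>R z" "x \<in> F" "b - inner x z \<le> t" "t \<le> 0" unfolding Smem by blast
    have "t = b - inner x z" using y(2) xt(1) innz[of x t] by (simp add: inner_commute)
    then show "y \<in> B" using xt g1e unfolding B_def by auto
  qed
  have Sle: "inner (-z) y \<le> -b" if yS0: "y \<in> S" for y
  proof -
    obtain x t where xt: "y = x + t *\<^sub>R z" "x \<in> F" "b - inner x z \<le> t" "t \<le> 0" using yS0 unfolding Smem by blast
    then show ?thesis using innz[of x t] by (simp add: inner_commute)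
  qed
  have Bne: "B \<noteq> {}" using Fne B_def by simp
  have Bface: "B face_of S" unfolding B_S by (rule face_of_Int_supporting_hyperplane_le[OF convS Sle])
  have affB1: "aff_dim B \<le> aff_dim F" unfolding B_def g1_def by (rule affmap_aff_dim_le)
  define g2 where "g2 = (\<lambda>y. y + (inner (- ((1 / inner phi z) *\<^sub>R phi)) y + m / inner phi z) *\<^sub>R z)"
  have g21: "g2 (g1 x) = x" if "x \<in> F" for x
  proof -
    have pz: "inner phi z \<noteq> 0" using phiz by simp
    have "inner phi (g1 x) = m + (b - inner x z) * inner phi z"
      using Fm[OF that] by (simp add: g1e inner_add_right)
    then have e: "inner (- ((1 / inner phi z) *\<^sub>R phi)) (g1 x) + m / inner phi z = inner x z - b"
      using pz by (simp add: field_simps)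
    have "g2 (g1 x) = g1 x + (inner x z - b) *\<^sub>R z" by (simp only: g2_def e)
    also have "\<dots> = x" by (simp add: g1e algebra_simps)
    finally show ?thesis .
  qed
  have "F = g2 ` B" unfolding B_def image_comp using g21 by (auto simp: image_iff)
  then have affB2: "aff_dim F \<le> aff_dim B" unfolding g2_def using affmap_aff_dim_le by metis
  have Bfac: "B facet_of S" unfolding facet_of_def using Bface Bne affB1 affB2 affF affS by simp
  have Bargmax: "B = {p \<in> S. \<forall>q\<in>S. inner (-z) q \<le> inner (-z) p}"
    unfolding B_S by (rule argmax_eq) (use Sle B_S Bne in auto)
  have botB: "bottom_face S B" unfolding bottom_face_def facet_dir_def z_def[symmetric]
    using Bfac Bargmax z0 zz by (intro exI[of _ "-z"]) auto
  have flatB: "flat B" unfolding flat_def z_def[symmetric] B_def using g1z by auto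
  have botU: "G = B" if hG: "bottom_face S G" for G
  proof -
    obtain psi where psi: "G facet_of S" "G = {p \<in> S. \<forall>q\<in>S. inner psi q \<le> inner psi p}" "inner psi z < 0"
      using hG unfolding bottom_face_def facet_dir_def z_def by blast
    have "G \<subseteq> B"
    proof
      fix y assume yG: "y \<in> G"
      then have yS: "y \<in> S" using psi(2) by blast
      then obtain x t where xt: "y = x + t *\<^sub>R z" "x \<in> F" "b - inner x z \<le> t" "t \<le> 0" unfolding Smem by blast
      have gS: "g1 x \<in> S" using B_S xt(2) B_def by blast
      have "inner psi (g1 x) \<le> inner psi y" using yG psi(2) gS by blast
      then have "(b - inner x z - t) * inner psi z \<le> 0"
        unfolding g1e xt(1) by (simp add: inner_add_right algebra_simps)
      then have "b - inner x z - t \<ge> 0" using psi(3)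
        by (metis diff_ge_0_iff_ge less_eq_real_def mult_neg_neg not_le)
      then have "t = b - inner x z" using xt(3) by linarith
      then have "y = g1 x" using xt(1) by (simp add: g1e)
      then show "y \<in> B" using xt(2) B_def by blast
    qed
    then show ?thesis using facets_nested_eq psi(1) Bfac by blast
  qed
  have Sle2: "inner (-phi) y \<le> -m" if yS0: "y \<in> S" for y
  proof -
    obtain x t where xt: "y = x + t *\<^sub>R z" "x \<in> F" "b - inner x z \<le> t" "t \<le> 0" using yS0 unfolding Smem by blast
    have "0 \<le> t * inner phi z" using xt(4) phiz by (simp add: mult_nonpos_nonpos)
    then show ?thesis using xt Fm by (simp add: inner_add_right)
  qed
  have F_S: "F = S \<inter> {x. inner (-phi) x = -m}"
  proof safe
    fix x assume "x \<in> F" then show "x \<in> S" using FS by blast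
  next
    fix x assume "x \<in> F" then show "inner (-phi) x = -m" using Fm by simp
  next
    fix y assume y: "y \<in> S" "inner (-phi) y = -m"
    then obtain x t where xt: "y = x + t *\<^sub>R z" "x \<in> F" "b - inner x z \<le> t" "t \<le> 0" unfolding Smem by blast
    have "t * inner phi z = 0" using y(2) xt Fm by (simp add: inner_add_right)
    then have "t = 0" using phiz by simp
    then show "y \<in> F" using xt by simp
  qed
  have Fface: "F face_of S" unfolding F_S by (rule face_of_Int_supporting_hyperplane_le[OF convS Sle2])
  have FfacS: "F facet_of S" unfolding facet_of_def using Fface Fne affF affS by simp
  have Fargmax: "F = {p \<in> S. \<forall>q\<in>S. inner (-phi) q \<le> inner (-phi) p}"
    unfolding F_S by (rule argmax_eq) (use Sle2 F_S Fne in auto)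
  have phi0: "phi \<noteq> 0" using phiz by auto
  have topF: "top_face S F" unfolding top_face_def facet_dir_def z_def[symmetric]
    using FfacS Fargmax phi0 phiz by (intro exI[of _ "-phi"]) auto
  have topU: "G = F" if hG: "top_face S G" for G
  proof -
    obtain psi where psi: "G facet_of S" "G = {p \<in> S. \<forall>q\<in>S. inner psi q \<le> inner psi p}" "inner psi z > 0"
      using hG unfolding top_face_def facet_dir_def z_def by blast
    have "G \<subseteq> F"
    proof
      fix y assume yG: "y \<in> G"
      then have yS: "y \<in> S" using psi(2) by blast
      then obtain x t where xt: "y = x + t *\<^sub>R z" "x \<in> F" "b - inner x z \<le> t" "t \<le> 0" unfolding Smem by blast
      have "inner psi x \<le> inner psi y" using yG psi(2) FS xt(2) by blast
      then have "0 \<le> t * inner psi z" unfolding xt(1) by (simp add: inner_add_right)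
      then have "t \<ge> 0" using psi(3) by (simp add: zero_le_mult_iff)
      then show "y \<in> F" using xt by simp
    qed
    then show ?thesis using facets_nested_eq psi(1) FfacS by blast
  qed
  have ndS: "ndim S" unfolding ndim_def using ptS affS by simp
  have grS: "grounded S" unfolding grounded_def using ndS botB botU flatB by blast
  have apS: "almost_pillar S" unfolding almost_pillar_def using ndS botB botU topF topU by blast
  have ptB: "ptope B" unfolding ptope_def B_def VF(2) g1_def affmap_hull using VF(1) VFne by blast
  have QB: "Q = msum B (closed_segment 0 (k *\<^sub>R z))"
  proof safe
    fix y assume "y \<in> Q"
    then obtain x t where xt: "y = x + t *\<^sub>R z" "x \<in> F" "b - inner x z \<le> t" "t \<le> h - inner x z" unfolding Qmem by blast
    define u where "u = (t - (b - inner x z)) / k"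
    have u: "0 \<le> u" "u \<le> 1" using xt k0 by (auto simp: u_def k_def field_simps)
    have "u * k = t - (b - inner x z)" using k0 by (simp add: u_def)
    then have "y = g1 x + ((1 - u) *\<^sub>R 0 + u *\<^sub>R (k *\<^sub>R z))"
      unfolding xt(1) g1e by (simp add: algebra_simps flip: scaleR_add_left)
    moreover have "(1 - u) *\<^sub>R 0 + u *\<^sub>R (k *\<^sub>R z) \<in> closed_segment 0 (k *\<^sub>R z)"
      using u by (auto simp: closed_segment_def)
    ultimately show "y \<in> msum B (closed_segment 0 (k *\<^sub>R z))" unfolding msum_def B_def using xt(2) by blast
  next
    fix y assume "y \<in> msum B (closed_segment 0 (k *\<^sub>R z))"
    then obtain x u where xu: "x \<in> F" "0 \<le> u" "u \<le> 1" "y = g1 x + u *\<^sub>R (k *\<^sub>R z)"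
      unfolding msum_def B_def closed_segment_def by auto
    have "y = x + (b - inner x z + u * k) *\<^sub>R z" unfolding xu(4) g1e by (simp add: algebra_simps)
    moreover have "u * k \<le> k" using xu k0 by (simp add: mult_left_le_one_le)
    moreover have "0 \<le> u * k" using xu k0 by simp
    ultimately show "y \<in> Q" unfolding Qmem using xu(1) by (intro exI[of _ x] exI[of _ "b - inner x z + u * k"]) (auto simp: k_def)
  qed
  have flatB': "flat B" by (rule flatB)
  have pilQ: "pillar Q" unfolding pillar_def ndim_def using ptQ affQ ptB flatB QB k0 z_def by blast
  have ident: "msum P S = msum Q F"
  proof safe
    fix y assume "y \<in> msum P S"
    then obtain a s where as: "y = a + s" "a \<in> P" "s \<in> S" unfolding msum_def by blast
    obtain f1 t1 where a: "a = f1 + t1 *\<^sub>R z" "f1 \<in> F" "0 \<le> t1" "t1 \<le> h - inner f1 z" using as(2) Prep by blast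
    obtain f2 s2 where s: "s = f2 + s2 *\<^sub>R z" "f2 \<in> F" "b - inner f2 z \<le> s2" "s2 \<le> 0" using as(3) unfolding Smem by blast
    show "y \<in> msum Q F"
    proof (cases "t1 + s2 \<le> h - inner f2 z")
      case True
      have "f2 + (t1 + s2) *\<^sub>R z \<in> Q" unfolding Qmem using True s a by (intro exI[of _ f2] exI[of _ "t1 + s2"]) auto
      moreover have "y = (f2 + (t1 + s2) *\<^sub>R z) + f1" unfolding as(1) a(1) s(1) by (simp add: algebra_simps)
      ultimately show ?thesis unfolding msum_def using a(2) by blast
    next
      case False
      have "0 \<le> h - inner f2 z" "b - inner f1 z \<le> 0" using fh[OF s(2)] fb'[OF a(2)] by auto
      then have "f1 + (t1 + s2) *\<^sub>R z \<in> Q" unfolding Qmem using False s a by (intro exI[of _ f1] exI[of _ "t1 + s2"]) auto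
      moreover have "y = (f1 + (t1 + s2) *\<^sub>R z) + f2" unfolding as(1) a(1) s(1) by (simp add: algebra_simps)
      ultimately show ?thesis unfolding msum_def using s(2) by blast
    qed
  next
    fix y assume "y \<in> msum Q F"
    then obtain q f where qf: "y = q + f" "q \<in> Q" "f \<in> F" unfolding msum_def by blast
    obtain x s where q: "q = x + s *\<^sub>R z" "x \<in> F" "b - inner x z \<le> s" "s \<le> h - inner x z" using qf(2) unfolding Qmem by blast
    have bnds: "b - inner x z \<le> 0" "0 \<le> h - inner f z" "b - inner f z \<le> 0" "0 \<le> h - inner x z"
      using fb'[OF q(2)] fh[OF qf(3)] fb'[OF qf(3)] fh[OF q(2)] by auto
    show "y \<in> msum P S"
    proof (cases "s \<le> h - inner f z")
      case True
      obtain t1 s2 where ts: "0 \<le> t1" "t1 \<le> h - inner f z" "b - inner x z \<le> s2" "s2 \<le> 0" "s = t1 + s2"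
        using split_lemma[OF bnds(1,2) q(3) True] by blast
      have "f + t1 *\<^sub>R z \<in> P" using Prep ts qf(3) by blast
      moreover have "x + s2 *\<^sub>R z \<in> S" unfolding Smem using ts q(2) by blast
      moreover have "y = (f + t1 *\<^sub>R z) + (x + s2 *\<^sub>R z)" unfolding qf(1) q(1) ts(5) by (simp add: algebra_simps)
      ultimately show ?thesis unfolding msum_def by blast
    next
      case False
      have "b - inner f z \<le> s" using False k0 by (simp add: k_def)
      then obtain t1 s2 where ts: "0 \<le> t1" "t1 \<le> h - inner x z" "b - inner f z \<le> s2" "s2 \<le> 0" "s = t1 + s2"
        using split_lemma[OF bnds(3,4) _ q(4)] by blast
      have "x + t1 *\<^sub>R z \<in> P" using Prep ts q(2) by blast
      moreover have "f + s2 *\<^sub>R z \<in> S" unfolding Smem using ts qf(3) by blast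
      moreover have "y = (x + t1 *\<^sub>R z) + (f + s2 *\<^sub>R z)" unfolding qf(1) q(1) ts(5) by (simp add: algebra_simps)
      ultimately show ?thesis unfolding msum_def by blast
    qed
  qed
  have pt0: "ptope {0::real^'n::{finite,wellorder}}" unfolding ptope_def by (intro exI[of _ "{0}"]) simp
  have "msum X {0} = X" for X :: "(real^'n::{finite,wellorder}) set" by (auto simp: msum_def)
  then have "groth_eq (msum P S) (msum Q F)" unfolding groth_eq_def using pt0 ident by metis
  then show ?thesis using pilQ grS apS by blast
qed

end
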